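(* Let $d\in\mathbb{N}$, $0<\lambda<1$, $0\le\epsilon<1$, and let $\mathrm{score}(d',b)$ for $d'\in\{0,\dots,d\}$, $b\in\{0,1\}$ be as defined in the context. Then the global maximizer of $\mathrm{score}$ over $d'\in\{0,\dots,d\}$, $b\in\{0,1\}$ is as follows: (a) if $0\le\epsilon\le\frac{\lambda(\lambda(d-2)+4)}{2(\lambda(d-1)+2)}$, it is $d'=d$, $b=1$; (b) if $\epsilon=\frac{\lambda(d-1)+2}{2d}$, it is $d'=d$, $b=1$; (c) if $\epsilon\ge\frac{\lambda}{2}+\frac32\,\frac{2-\lambda}{\lambda^2(d-1)+3}$, it is $d'=0$, $b=0$.
   Context: Let $\phi(x):=\max(0,x)$, $\epsilon_+:=1-\epsilon$, $\epsilon_-:=\lambda/2-\epsilon$. Define $r_1:=\epsilon_++\frac{\lambda^2}{3}(d-1)\epsilon_-$, $r_2:=\epsilon_-+\frac{\lambda^2}{3}\epsilon_++\frac{\lambda^2}{3}(d-2)\epsilon_-$, $r_3:=\epsilon_++\frac{\lambda}{2}(d-1)\epsilon_-$, $r_4:=\epsilon_-+\frac{\lambda}{2}\epsilon_++\frac{\lambda}{2}(d-2)\epsilon_-$, $r_5:=\frac{\lambda}{2}\epsilon_++\frac{\lambda}{2}\epsilon_-+\frac{\lambda^2}{4}(d-2)\epsilon_-$, $r_6:=\lambda\epsilon_-+\frac{\lambda^2}{4}\epsilon_++\frac{\lambda^2}{4}(d-3)\epsilon_-$, $r_7:=\epsilon_++(d-1)\epsilon_-$. For $d'\in\{0,\dots,d\}$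 and $b\in\{0,1\}$ define $s_1:=br_7+r_3+(d'-1)r_4$, $s_2:=br_7+d'r_4$, $s_3:=br_3+r_1+(d'-1)r_5$, $s_4:=br_3+d'r_5$, $s_5:=br_4+r_2+r_5+(d'-2)r_6$, $s_6:=br_4+r_2+(d'-1)r_6$, $s_7:=br_4+r_5+(d'-1)r_6$, $s_8:=br_4+d'r_6$ (each a function of $(d',b)$), and $$\mathrm{score}(d',b):=d'\phi(s_1)+(d-d')\phi(s_2)+d'\phi(s_3)+(d-d')\phi(s_4)+d'(d'-1)\phi(s_5)+d'(d-d')\phi(s_6)+d'(d-d')\phi(s_7)+(d-d')(d-d'-1)\phi(s_8).$$ *)

theory Defs
  imports Complex_Main
begin

definition relu :: "real \<Rightarrow> real" where
  "relu x = max 0 x"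

definition epsP :: "real \<Rightarrow> real" where "epsP e = 1 - e"
definition epsM :: "real \<Rightarrow> real \<Rightarrow> real" where "epsM l e = l / 2 - e"

definition r1 :: "nat \<Rightarrow> real \<Rightarrow> real \<Rightarrow> real" where
  "r1 d l e = epsP e + l^2 / 3 * (real d - 1) * epsM l e"
definition r2 :: "nat \<Rightarrow> real \<Rightarrow> real \<Rightarrow> real" where
  "r2 d l e = epsM l e + l^2 / 3 * epsP e + l^2 / 3 * (real d - 2) * epsM l e"
definition r3 :: "nat \<Rightarrow> real \<Rightarrow> real \<Rightarrow> real" where
  "r3 d l e = epsP e + l / 2 * (real d - 1) * epsM l e"
definition r4 :: "nat \<Rightarrow> real \<Rightarrow> real \<Rightarrow> real" where
  "r4 d l e = epsM l e + l / 2 * epsP e + l / 2 * (real d - 2) * epsM l e"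
definition r5 :: "nat \<Rightarrow> real \<Rightarrow> real \<Rightarrow> real" where
  "r5 d l e = l / 2 * epsP e + l / 2 * epsM l e + l^2 / 4 * (real d - 2) * epsM l e"
definition r6 :: "nat \<Rightarrow> real \<Rightarrow> real \<Rightarrow> real" where
  "r6 d l e = l * epsM l e + l^2 / 4 * epsP e + l^2 / 4 * (real d - 3) * epsM l e"
definition r7 :: "nat \<Rightarrow> real \<Rightarrow> real \<Rightarrow> real" where
  "r7 d l e = epsP e + (real d - 1) * epsM l e"

definition s1 where "s1 d l e (d'::nat) (b::nat) = real b * r7 d l e + r3 d l e + (real d' - 1) * r4 d l e"
definition s2 where "s2 d l e (d'::nat) (b::nat) = real b * r7 d l e + real d' * r4 d l e"
definition s3 where "s3 d l e (d'::nat) (b::nat) = real b * r3 d l e + r1 d l e + (real d' - 1) * r5 d l e"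
definition s4 where "s4 d l e (d'::nat) (b::nat) = real b * r3 d l e + real d' * r5 d l e"
definition s5 where "s5 d l e (d'::nat) (b::nat) = real b * r4 d l e + r2 d l e + r5 d l e + (real d' - 2) * r6 d l e"
definition s6 where "s6 d l e (d'::nat) (b::nat) = real b * r4 d l e + r2 d l e + (real d' - 1) * r6 d l e"
definition s7 where "s7 d l e (d'::nat) (b::nat) = real b * r4 d l e + r5 d l e + (real d' - 1) * r6 d l e"
definition s8 where "s8 d l e (d'::nat) (b::nat) = real b * r4 d l e + real d' * r6 d l e"

definition score :: "nat \<Rightarrow> real \<Rightarrow> real \<Rightarrow> nat \<Rightarrow> nat \<Rightarrow> real" where
  "score d l e d' b =
     real d' * relu (s1 d l e d' b)
   + (real d - real d') * relu (s2 d l e d' b)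
   + real d' * relu (s3 d l e d' b)
   + (real d - real d') * relu (s4 d l e d' b)
   + real d' * (real d' - 1) * relu (s5 d l e d' b)
   + real d' * (real d - real d') * relu (s6 d l e d' b)
   + real d' * (real d - real d') * relu (s7 d l e d' b)
   + (real d - real d') * (real d - real d' - 1) * relu (s8 d l e d' b)"

definition is_global_max :: "nat \<Rightarrow> real \<Rightarrow> real \<Rightarrow> nat \<Rightarrow> nat \<Rightarrow> bool" where
  "is_global_max d l e d0 b0 \<longleftrightarrow> d0 \<le> d \<and> b0 \<le> 1 \<and>
     (\<forall>d' b. d' \<le> d \<and> b \<le> 1 \<longrightarrow> score d l e d' b \<le> score d l e d0 b0)"

end

theory Submission
  imports Defs
begin

lemma relu_ge0: "0 \<le> relu x" by (simp add: relu_def)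
lemma relu_ge: "x \<le> relu x" by (simp add: relu_def)
lemma relu_mono: "x \<le> y \<Longrightarrow> relu x \<le> relu y" by (simp add: relu_def)
lemma relu_add: "relu (x + y) \<le> relu x + relu y" by (simp add: relu_def)
lemma relu_pos: "0 \<le> x \<Longrightarrow> relu x = x" by (simp add: relu_def)
lemma relu_neg: "x \<le> 0 \<Longrightarrow> relu x = 0" by (simp add: relu_def)
lemma relu_scale: "0 \<le> c \<Longrightarrow> relu (c * x) = c * relu x"
  by (simp add: relu_def max_mult_distrib_left)
lemma relu_le_sum: "x \<le> y + z \<Longrightarrow> relu x \<le> relu y + relu z"
  by (simp add: relu_def)

lemma inA:
  fixes R1 R2 R3 R4 R5 R6 R7 p q bb :: real
  assumes "R1 \<ge> 0" "R3 \<ge> 0" "R4 \<ge> 0" "R5 \<ge> 0" "R7 \<ge> 0"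
    and K: "R4 + R5 + (q-2)*R6 \<ge> 0"
    and "1 \<le> p" "p \<le> q" "p = q \<or> p \<le> q - 1" "0 \<le> bb" "bb \<le> 1"
  shows "relu (bb*R7 + R3 + (p-1)*R4) + relu (bb*R3 + R1 + (p-1)*R5)
      + (p-1)*relu (bb*R4 + R2 + R5 + (p-2)*R6) + (q-p)*relu (bb*R4 + R2 + (p-1)*R6)
     \<le> relu (R7 + R3 + (q-1)*R4) + relu (R3 + R1 + (q-1)*R5) + (q-1)*relu (R4 + R2 + R5 + (q-2)*R6)"
proof -
  define t where "t = R4 + R2 + R5 + (q-2)*R6"
  have nn: "0 \<le> bb*R7" "0 \<le> (p-1)*R4" "0 \<le> bb*R3" "0 \<le> (p-1)*R5" "0 \<le> (q-1)*R4" "0 \<le> (q-1)*R5"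
    "0 \<le> (1-bb)*R4"
    using assms by auto
  have a1: "relu (bb*R7 + R3 + (p-1)*R4) = bb*R7 + R3 + (p-1)*R4" using nn assms by (intro relu_pos) linarith
  have a2: "relu (R7 + R3 + (q-1)*R4) = R7 + R3 + (q-1)*R4" using nn assms by (intro relu_pos) linarith
  have a3: "relu (bb*R3 + R1 + (p-1)*R5) = bb*R3 + R1 + (p-1)*R5" using nn assms by (intro relu_pos) linarith
  have a4: "relu (R3 + R1 + (q-1)*R5) = R3 + R1 + (q-1)*R5" using nn assms by (intro relu_pos) linarith
  define X where "X = relu (-((q-p)*R6))"
  define Y where "Y = relu (-R5 - (q-p-1)*R6)"
  have h5: "relu (bb*R4 + R2 + R5 + (p-2)*R6) \<le> relu t + X"
  proof -
    have "t + (-((q-p)*R6)) - (bb*R4 + R2 + R5 + (p-2)*R6) = (1-bb)*R4"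
      by (simp add: t_def algebra_simps)
    then show ?thesis unfolding X_def using nn by (intro relu_le_sum) linarith
  qed
  have h6: "relu (bb*R4 + R2 + (p-1)*R6) \<le> relu t + Y"
  proof -
    have "t + (-R5 - (q-p-1)*R6) - (bb*R4 + R2 + (p-1)*R6) = (1-bb)*R4"
      by (simp add: t_def algebra_simps)
    then show ?thesis unfolding Y_def using nn by (intro relu_le_sum) linarith
  qed
  have Z: "(p-1)*X + (q-p)*Y \<le> (1-bb)*(R7+R3) + (q-p)*(R4+R5)"
  proof (cases "p = q")
    case True
    then have "X = 0" unfolding X_def by (simp add: relu_def)
    moreover have "0 \<le> (1-bb)*(R7+R3)" using assms by simp
    ultimately show ?thesis using True by simp
  next
    case False
    then have pq: "p \<le> q - 1" using assms by simp
    show ?thesis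
    proof (cases "R6 \<ge> 0")
      case True
      have "X = 0" unfolding X_def using True pq by (intro relu_neg) simp
      moreover have "Y = 0" unfolding Y_def using True pq assms
        by (intro relu_neg) (smt (verit) mult_nonneg_nonneg)
      moreover have "0 \<le> (1-bb)*(R7+R3)" "0 \<le> (q-p)*(R4+R5)" using assms by simp_all
      ultimately show ?thesis by simp
    next
      case False
      have "0 \<le> (q-p)*(-R6)" using False pq by (intro mult_nonneg_nonneg) auto
      then have X: "X = (q-p)*(-R6)" unfolding X_def by (simp add: relu_def)
      have b1: "(p-1)*(-R6) \<le> (q-2)*(-R6)" using False pq by (intro mult_right_mono) auto
      have b2: "(p-1)*(-R6) + Y \<le> R4 + R5"
      proof (cases "-R5 - (q-p-1)*R6 \<le> 0")
        case True
        then have "Y = 0" unfolding Y_def by (rule relu_neg)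
        then show ?thesis using b1 K by (simp add: algebra_simps)
      next
        case False
        then have "Y = -R5 - (q-p-1)*R6" unfolding Y_def by (intro relu_pos) simp
        moreover have "(p-1)*(-R6) + (-R5 - (q-p-1)*R6) = -R5 - (q-2)*R6" by (simp add: algebra_simps)
        ultimately show ?thesis using K assms by linarith
      qed
      have "(p-1)*X + (q-p)*Y = (q-p)*((p-1)*(-R6) + Y)" unfolding X by (simp add: algebra_simps)
      also have "\<dots> \<le> (q-p)*(R4+R5)" using b2 pq by (intro mult_left_mono) auto
      finally show ?thesis using assms by (smt (verit) mult_nonneg_nonneg)
    qed
  qed
  have m5: "(p-1)*relu (bb*R4 + R2 + R5 + (p-2)*R6) \<le> (p-1)*(relu t + X)"
    using h5 assms by (intro mult_left_mono) auto
  have m6: "(q-p)*relu (bb*R4 + R2 + (p-1)*R6) \<le> (q-p)*(relu t + Y)"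
    using h6 assms by (intro mult_left_mono) auto
  have eq: "bb*R7 + R3 + (p-1)*R4 + (bb*R3 + R1 + (p-1)*R5) + (p-1)*(relu t + X) + (q-p)*(relu t + Y)
     = R7 + R3 + (q-1)*R4 + (R3 + R1 + (q-1)*R5) + (q-1)*relu t
       + ((p-1)*X + (q-p)*Y - ((1-bb)*(R7+R3) + (q-p)*(R4+R5)))"
    by (simp add: algebra_simps)
  show ?thesis unfolding a1 a2 a3 a4 t_def[symmetric] using m5 m6 Z eq by linarith
qed


lemma outA:
  fixes R1 R2 R3 R4 R5 R6 R7 p q bb :: real
  assumes "R1 \<ge> 0" "R3 \<ge> 0" "R4 \<ge> 0" "R5 \<ge> 0" "R7 \<ge> 0"
    and K: "R4 + R5 + (q-2)*R6 \<ge> 0" and K2: "R1 + R3 + (q-1)*R2 \<ge> 0"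
    and "0 \<le> p" "p \<le> q - 1" "q-p-1 = 0 \<or> q-p-1 \<ge> 1" "0 \<le> bb" "bb \<le> 1"
  shows "relu (bb*R7 + p*R4) + relu (bb*R3 + p*R5)
      + p*relu (bb*R4 + R5 + (p-1)*R6) + (q-p-1)*relu (bb*R4 + p*R6)
     \<le> relu (R7 + R3 + (q-1)*R4) + relu (R3 + R1 + (q-1)*R5) + (q-1)*relu (R4 + R2 + R5 + (q-2)*R6)"
proof -
  define t where "t = R4 + R2 + R5 + (q-2)*R6"
  define k where "k = q-p-1"
  have k0: "0 \<le> k" "k = 0 \<or> k \<ge> 1" using assms by (auto simp: k_def)
  have nn: "0 \<le> bb*R7" "0 \<le> p*R4" "0 \<le> bb*R3" "0 \<le> p*R5" "0 \<le> (q-1)*R4" "0 \<le> (q-1)*R5"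
    "0 \<le> (1-bb)*R4"
    using assms by auto
  have a1: "relu (bb*R7 + p*R4) = bb*R7 + p*R4" using nn assms by (intro relu_pos) linarith
  have a2: "relu (R7 + R3 + (q-1)*R4) = R7 + R3 + (q-1)*R4" using nn assms by (intro relu_pos) linarith
  have a3: "relu (bb*R3 + p*R5) = bb*R3 + p*R5" using nn assms by (intro relu_pos) linarith
  have a4: "relu (R3 + R1 + (q-1)*R5) = R3 + R1 + (q-1)*R5" using nn assms by (intro relu_pos) linarith
  define N2 where "N2 = relu (-R2)"
  define N6 where "N6 = relu (-R6)"
  have N6: "0 \<le> N6" unfolding N6_def by (rule relu_ge0)
  have h7: "relu (bb*R4 + R5 + (p-1)*R6) \<le> relu t + (N2 + k*N6)"
  proof -
    have "t + (-R2 + k*(-R6)) - (bb*R4 + R5 + (p-1)*R6) = (1-bb)*R4"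
      by (simp add: t_def k_def algebra_simps)
    then have "relu (bb*R4 + R5 + (p-1)*R6) \<le> relu t + relu (-R2 + k*(-R6))"
      using nn by (intro relu_le_sum) linarith
    also have "relu (-R2 + k*(-R6)) \<le> N2 + k*N6"
      unfolding N2_def N6_def using relu_add[of "-R2" "k*(-R6)"] relu_scale[of k "-R6"] k0 by simp
    finally show ?thesis by simp
  qed
  have h8: "k*relu (bb*R4 + p*R6) \<le> k*(relu t + (N2 + (k-1)*N6))"
  proof (cases "k = 0")
    case True then show ?thesis by simp
  next
    case False
    then have k1: "k \<ge> 1" using k0 by auto
    have "t + (-R2 + (k-1)*(-R6)) - (bb*R4 + p*R6) = (1-bb)*R4 + R5"
      by (simp add: t_def k_def algebra_simps)
    then have "relu (bb*R4 + p*R6) \<le> relu t + relu (-R2 + (k-1)*(-R6))"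
      using nn assms by (intro relu_le_sum) linarith
    also have "relu (-R2 + (k-1)*(-R6)) \<le> N2 + (k-1)*N6"
      unfolding N2_def N6_def using relu_add[of "-R2" "(k-1)*(-R6)"] relu_scale[of "k-1" "-R6"] k1 by simp
    finally show ?thesis using k0 by (intro mult_left_mono) auto
  qed
  have m7: "p*relu (bb*R4 + R5 + (p-1)*R6) \<le> p*(relu t + (N2 + k*N6))"
    using h7 assms by (intro mult_left_mono) auto
  have Z1: "(q-1)*N2 \<le> R1 + R3"
  proof (cases "R2 \<ge> 0")
    case True then have "N2 = 0" unfolding N2_def by (intro relu_neg) simp
    then show ?thesis using assms by simp
  next
    case False then have "N2 = -R2" unfolding N2_def by (intro relu_pos) simp
    then show ?thesis using K2 by (simp add: algebra_simps)
  qed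
  have Z2: "k*(q-2)*N6 \<le> k*(R4+R5)"
  proof (cases "k = 0")
    case True then show ?thesis by simp
  next
    case False
    then have k1: "k \<ge> 1" using k0 by auto
    have "(q-2)*N6 \<le> R4 + R5"
    proof (cases "R6 \<ge> 0")
      case True then have "N6 = 0" unfolding N6_def by (intro relu_neg) simp
      then show ?thesis using assms by simp
    next
      case False then have "N6 = -R6" unfolding N6_def by (intro relu_pos) simp
      then show ?thesis using K by (simp add: algebra_simps)
    qed
    then show ?thesis using k1 by (simp add: mult.assoc mult_left_mono)
  qed
  have eq: "bb*R7 + p*R4 + (bb*R3 + p*R5) + p*(relu t + (N2 + k*N6)) + k*(relu t + (N2 + (k-1)*N6))
     = R7 + R3 + (q-1)*R4 + (R3 + R1 + (q-1)*R5) + (q-1)*relu t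
       + ((q-1)*N2 + k*(q-2)*N6 - (R1 + R3) - k*(R4+R5) - (1-bb)*(R7+R3))"
    by (simp add: k_def algebra_simps)
  have bbnn: "0 \<le> (1-bb)*(R7+R3)" using assms by simp
  show ?thesis unfolding a1 a2 a3 a4 t_def[symmetric] k_def[symmetric] using m7 h8 Z1 Z2 eq bbnn by linarith
qed


definition SC :: "real \<Rightarrow> real \<Rightarrow> real \<Rightarrow> real \<Rightarrow> real \<Rightarrow> real \<Rightarrow> real \<Rightarrow> real \<Rightarrow> real \<Rightarrow> real \<Rightarrow> real" where
  "SC R1 R2 R3 R4 R5 R6 R7 q p bb =
     p * relu (bb*R7 + R3 + (p-1)*R4) + (q - p) * relu (bb*R7 + p*R4)
   + p * relu (bb*R3 + R1 + (p-1)*R5) + (q - p) * relu (bb*R3 + p*R5)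
   + p*(p-1) * relu (bb*R4 + R2 + R5 + (p-2)*R6) + p*(q-p) * relu (bb*R4 + R2 + (p-1)*R6)
   + p*(q-p) * relu (bb*R4 + R5 + (p-1)*R6) + (q-p)*(q-p-1) * relu (bb*R4 + p*R6)"

lemma score_SC: "score d l e d' b = SC (r1 d l e) (r2 d l e) (r3 d l e) (r4 d l e) (r5 d l e) (r6 d l e) (r7 d l e) (real d) (real d') (real b)"
  unfolding score_def SC_def s1_def s2_def s3_def s4_def s5_def s6_def s7_def s8_def by simp

lemma SC_decomp: "SC R1 R2 R3 R4 R5 R6 R7 q p bb =
   p * (relu (bb*R7 + R3 + (p-1)*R4) + relu (bb*R3 + R1 + (p-1)*R5)
      + (p-1)*relu (bb*R4 + R2 + R5 + (p-2)*R6) + (q-p)*relu (bb*R4 + R2 + (p-1)*R6))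
 + (q-p) * (relu (bb*R7 + p*R4) + relu (bb*R3 + p*R5)
      + p*relu (bb*R4 + R5 + (p-1)*R6) + (q-p-1)*relu (bb*R4 + p*R6))"
  unfolding SC_def by (simp add: algebra_simps)

lemma SC_top: "SC R1 R2 R3 R4 R5 R6 R7 q q 1 =
   q * (relu (R7 + R3 + (q-1)*R4) + relu (R3 + R1 + (q-1)*R5) + (q-1)*relu (R4 + R2 + R5 + (q-2)*R6))"
  unfolding SC_def by (simp add: algebra_simps)

lemma caseA_SC:
  fixes R1 R2 R3 R4 R5 R6 R7 :: real and d d' b :: nat
  assumes "R1 \<ge> 0" "R3 \<ge> 0" "R4 \<ge> 0" "R5 \<ge> 0" "R7 \<ge> 0"
    and K: "R4 + R5 + (real d-2)*R6 \<ge> 0" and K2: "R1 + R3 + (real d-1)*R2 \<ge> 0"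
    and "d' \<le> d" "b \<le> 1"
  shows "SC R1 R2 R3 R4 R5 R6 R7 (real d) (real d') (real b) \<le> SC R1 R2 R3 R4 R5 R6 R7 (real d) (real d) 1"
proof -
  define T where "T = relu (R7 + R3 + (real d-1)*R4) + relu (R3 + R1 + (real d-1)*R5) + (real d-1)*relu (R4 + R2 + R5 + (real d-2)*R6)"
  have bb: "0 \<le> real b" "real b \<le> 1" using assms by auto
  let ?IN = "relu (real b*R7 + R3 + (real d'-1)*R4) + relu (real b*R3 + R1 + (real d'-1)*R5)
      + (real d'-1)*relu (real b*R4 + R2 + R5 + (real d'-2)*R6) + (real d-real d')*relu (real b*R4 + R2 + (real d'-1)*R6)"
  let ?OUT = "relu (real b*R7 + real d'*R4) + relu (real b*R3 + real d'*R5)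
      + real d'*relu (real b*R4 + R5 + (real d'-1)*R6) + (real d-real d'-1)*relu (real b*R4 + real d'*R6)"
  have i: "real d' * ?IN \<le> real d' * T"
  proof (cases "d' = 0")
    case True then show ?thesis by simp
  next
    case False
    have "?IN \<le> T" unfolding T_def
      apply (rule inA)
      using assms False by auto
    then show ?thesis by (intro mult_left_mono) auto
  qed
  have o: "(real d - real d') * ?OUT \<le> (real d - real d') * T"
  proof (cases "d' = d")
    case True then show ?thesis by simp
  next
    case False
    then have dd: "d' + 1 \<le> d" using assms by auto
    have ki: "real d - real d' - 1 = 0 \<or> real d - real d' - 1 \<ge> 1"
    proof (cases "d = d' + 1")
      case True then show ?thesis by simp
    next
      case False then have "d' + 2 \<le> d" using dd by auto
      then have "real d' + 2 \<le> real d" by (metis of_nat_add of_nat_le_iff numeral_One of_nat_numeral) 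
      then show ?thesis by simp
    qed
    have "?OUT \<le> T" unfolding T_def
      apply (rule outA)
      using assms dd ki by auto
    then show ?thesis using assms by (intro mult_left_mono) auto
  qed
  show ?thesis unfolding SC_decomp[of _ _ _ _ _ _ _ "real d" "real d'"] SC_top T_def[symmetric]
    using i o by (simp add: algebra_simps)
qed


lemma caseC_SC:
  fixes R1 R2 R3 R4 R5 R6 R7 :: real and d d' b :: nat
  assumes "R1 \<le> 0" "R2 \<le> 0" "R3 \<le> 0" "R4 \<le> 0" "R5 \<le> 0" "R6 \<le> 0" "R7 \<le> 0"
    and "d' \<le> d" "b \<le> 1"
  shows "SC R1 R2 R3 R4 R5 R6 R7 (real d) (real d') (real b) \<le> 0"
proof -
  have bb: "0 \<le> real b" "real b \<le> 1" using assms by auto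
  have q: "real d' \<le> real d" using assms by simp
  have B: "real b * R1 \<le> 0" "real b * R2 \<le> 0" "real b * R3 \<le> 0" "real b * R4 \<le> 0"
     "real b * R5 \<le> 0" "real b * R6 \<le> 0" "real b * R7 \<le> 0"
    using assms bb by (simp_all add: mult_nonneg_nonpos)
  have P: "real d' * R1 \<le> 0" "real d' * R2 \<le> 0" "real d' * R3 \<le> 0" "real d' * R4 \<le> 0"
     "real d' * R5 \<le> 0" "real d' * R6 \<le> 0" "real d' * R7 \<le> 0"
    using assms by (simp_all add: mult_nonneg_nonpos)
  consider "d' = 0" | "d' = 1" | "d' \<ge> 2" by linarith
  then show ?thesis
  proof cases
    case 1
    have "relu (real b*R7 + 0*R4) = 0" "relu (real b*R3 + 0*R5) = 0" "relu (real b*R4 + 0*R6) = 0"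
      using B by (auto intro: relu_neg)
    then show ?thesis using 1 by (simp add: SC_def)
  next
    case 2
    have "relu (real b*R7 + R3 + (1-1)*R4) = 0" "relu (real b*R7 + 1*R4) = 0"
      "relu (real b*R3 + R1 + (1-1)*R5) = 0" "relu (real b*R3 + 1*R5) = 0"
      "relu (real b*R4 + R2 + (1-1)*R6) = 0" "relu (real b*R4 + R5 + (1-1)*R6) = 0"
      "relu (real b*R4 + 1*R6) = 0"
      using B assms by (auto intro: relu_neg)
    then show ?thesis using 2 by (simp add: SC_def)
  next
    case 3
    then have p2: "real d' \<ge> 2" by simp
    have Q: "(real d' - 1) * R4 \<le> 0" "(real d' - 1) * R5 \<le> 0" "(real d' - 1) * R6 \<le> 0" "(real d' - 2) * R6 \<le> 0"
      using assms p2 by (simp_all add: mult_nonneg_nonpos)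
    have "relu (real b*R7 + R3 + (real d'-1)*R4) = 0" "relu (real b*R7 + real d'*R4) = 0"
      "relu (real b*R3 + R1 + (real d'-1)*R5) = 0" "relu (real b*R3 + real d'*R5) = 0"
      "relu (real b*R4 + R2 + R5 + (real d'-2)*R6) = 0"
      "relu (real b*R4 + R2 + (real d'-1)*R6) = 0" "relu (real b*R4 + R5 + (real d'-1)*R6) = 0"
      "relu (real b*R4 + real d'*R6) = 0"
      using B P Q assms by (auto intro!: relu_neg)
    then show ?thesis by (simp add: SC_def)
  qed
qed

lemma SC_00: "SC R1 R2 R3 R4 R5 R6 R7 q 0 0 = 0"
  by (simp add: SC_def relu_def)

lemma caseB_SC:
  fixes Aa Cc U :: real and d d' b :: nat
  assumes "0 < Aa" "Aa \<le> Cc" "2*U \<le> Cc" "0 \<le> U" "d \<ge> 2" "d' \<le> d" "b \<le> 1"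
  defines "x \<equiv> real d - 1"
  shows "SC (x*Cc) (-Cc) (x*Aa) (-Aa) ((x-1)*U) (-2*U) 0 (real d) (real d') (real b)
       \<le> SC (x*Cc) (-Cc) (x*Aa) (-Aa) ((x-1)*U) (-2*U) 0 (real d) (real d) 1"
proof -
  define p where "p = real d'"
  define q where "q = real d"
  define bb where "bb = real b"
  have bb: "0 \<le> bb" "bb \<le> 1" using assms by (auto simp: bb_def)
  have pq: "0 \<le> p" "p \<le> q" "q \<ge> 2" "x = q - 1" using assms by (auto simp: p_def q_def x_def)
  have x1: "x \<ge> 1" using pq by simp
  define V where "V = relu ((q - 2*p)*U)"
  have V0: "0 \<le> V" unfolding V_def by (rule relu_ge0)
  have t1: "relu (bb*0 + x*Aa + (p-1)*(-Aa)) = (q-p)*Aa"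
  proof -
    have "bb*0 + x*Aa + (p-1)*(-Aa) = (q-p)*Aa" by (simp add: x_def q_def algebra_simps)
    moreover have "0 \<le> (q-p)*Aa" using pq assms by simp
    ultimately show ?thesis by (simp add: relu_pos)
  qed
  have t2: "relu (bb*0 + p*(-Aa)) = 0" using pq assms by (intro relu_neg) simp
  have t3: "p * relu (bb*(x*Aa) + x*Cc + (p-1)*((x-1)*U)) \<le> p * (x*Aa + x*Cc + (p-1)*((x-1)*U))"
  proof (cases "p \<ge> 1")
    case True
    have "0 \<le> (p-1)*((x-1)*U)" using True x1 assms by simp
    moreover have "0 \<le> x*Cc" "bb*(x*Aa) \<le> x*Aa" "0 \<le> x*Aa" using x1 assms bb by (auto simp: mult_left_le_one_le)
    ultimately have "relu (bb*(x*Aa) + x*Cc + (p-1)*((x-1)*U)) \<le> x*Aa + x*Cc + (p-1)*((x-1)*U)"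
      by (simp add: relu_def)
    then show ?thesis using pq by (intro mult_left_mono) auto
  next
    case False
    then have "p = 0" using assms unfolding p_def by simp
    then show ?thesis by simp
  qed
  have t4: "relu (bb*(x*Aa) + p*((x-1)*U)) \<le> x*Aa + p*((x-1)*U)"
  proof -
    have "0 \<le> p*((x-1)*U)" using pq x1 assms by simp
    moreover have "0 \<le> x*Aa" "bb*(x*Aa) \<le> x*Aa" using x1 assms bb by (auto simp: mult_left_le_one_le)
    ultimately show ?thesis by (simp add: relu_def)
  qed
  have bA: "0 \<le> bb*Aa" using bb assms by simp
  have t5: "relu (bb*(-Aa) + (-Cc) + (x-1)*U + (p-2)*(-2*U)) \<le> V"
  proof -
    have "bb*(-Aa) + (-Cc) + (x-1)*U + (p-2)*(-2*U) = -(bb*Aa) - Cc + 2*U + (q-2*p)*U"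
      by (simp add: x_def q_def algebra_simps)
    then show ?thesis unfolding V_def using bA assms by (intro relu_mono) linarith
  qed
  have t6: "relu (bb*(-Aa) + (-Cc) + (p-1)*(-2*U)) = 0"
  proof -
    have "0 \<le> p*U" using pq assms by simp
    then show ?thesis using bA assms by (intro relu_neg) (simp add: algebra_simps)
  qed
  have t7: "relu (bb*(-Aa) + (x-1)*U + (p-1)*(-2*U)) \<le> V"
  proof -
    have "bb*(-Aa) + (x-1)*U + (p-1)*(-2*U) = -(bb*Aa) + (q-2*p)*U"
      by (simp add: x_def q_def algebra_simps)
    then show ?thesis unfolding V_def using bA assms by (intro relu_mono) linarith
  qed
  have t8: "relu (bb*(-Aa) + p*(-2*U)) = 0"
  proof -
    have "0 \<le> p*U" using pq assms by simp
    then show ?thesis using bA assms by (intro relu_neg) (simp add: algebra_simps)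
  qed
  have top1: "relu (x*Aa + x*Cc + (q-1)*((x-1)*U)) = x*Aa + x*Cc + (q-1)*((x-1)*U)"
  proof -
    have "0 \<le> x*Cc" "0 \<le> x*Aa" "0 \<le> (q-1)*((x-1)*U)" using x1 assms pq by auto
    then show ?thesis by (subst relu_pos) auto
  qed
  have top2: "relu (0 + x*Aa + (q-1)*(-Aa)) = 0" by (simp add: x_def q_def relu_def algebra_simps)
  have top3: "relu (-Aa + (-Cc) + (x-1)*U + (q-2)*(-2*U)) = 0"
  proof -
    have "0 \<le> (x-1)*U" "0 \<le> (q-2)*U" using x1 pq assms by auto
    moreover have "-Aa + (-Cc) + (x-1)*U + (q-2)*(-2*U) = -Aa - Cc - (q-2)*U"
      by (simp add: x_def q_def algebra_simps)
    ultimately show ?thesis using assms by (intro relu_neg) linarith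
  qed
  have top: "SC (x*Cc) (-Cc) (x*Aa) (-Aa) ((x-1)*U) (-2*U) 0 q q 1 = q * (x*Aa + x*Cc + (q-1)*((x-1)*U))"
    unfolding SC_top top1 top2 top3 by simp
  have w: "0 \<le> q - p" "0 \<le> p*(p-1) + p*(q-p)" "0 \<le> q-p" using pq by (auto simp: algebra_simps)
  have w2: "0 \<le> p*(p-1) \<or> p = 0"
    using pq unfolding p_def by (cases "d' = 0") auto
  have m5: "p*(p-1)*relu (bb*(-Aa) + (-Cc) + (x-1)*U + (p-2)*(-2*U)) \<le> p*(p-1)*V"
    using w2 t5 by (auto intro: mult_left_mono)
  have m7: "p*(q-p)*relu (bb*(-Aa) + (x-1)*U + (p-1)*(-2*U)) \<le> p*(q-p)*V"
    using t7 pq by (intro mult_left_mono) auto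
  have m4: "(q-p)*relu (bb*(x*Aa) + p*((x-1)*U)) \<le> (q-p)*(x*Aa + p*((x-1)*U))"
    using t4 pq by (intro mult_left_mono) auto
  have SCle: "SC (x*Cc) (-Cc) (x*Aa) (-Aa) ((x-1)*U) (-2*U) 0 q p bb \<le>
     p*((q-p)*Aa) + p * (x*Aa + x*Cc + (p-1)*((x-1)*U)) + (q-p)*(x*Aa + p*((x-1)*U)) + p*(p-1)*V + p*(q-p)*V"
    unfolding SC_def using t1 t2 t3 t6 t8 m4 m5 m7 by simp
  have D1: "0 \<le> (q-p)*(x*Cc - p*Aa)"
  proof (cases "d' = d")
    case True then show ?thesis by (simp add: p_def q_def)
  next
    case False
    then have "p \<le> x" using assms unfolding p_def x_def by simp
    then have "p*Aa \<le> x*Aa" using assms by (intro mult_right_mono) auto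
    also have "x*Aa \<le> x*Cc" using assms x1 by (intro mult_left_mono) auto
    finally show ?thesis using pq by simp
  qed
  have D2: "p*V \<le> (q-p)*((x-1)*U)"
  proof (cases "q - 2*p \<le> 0")
    case True
    then have "V = 0" unfolding V_def using assms by (intro relu_neg) (simp add: mult_nonpos_nonneg)
    then show ?thesis using pq x1 assms by simp
  next
    case False
    then have V: "V = (q-2*p)*U" unfolding V_def using assms by (intro relu_pos) simp
    have key: "p*(q-2*p) \<le> (q-p)*(q-2)"
    proof -
      have j: "(q-p)*(q-p-2) \<ge> -1" using sum_squares_ge_zero[of "q-p-1" 0] by (simp add: power2_eq_square algebra_simps)
      have "(q-p)*(q-2) - p*(q-2*p) = (q-p)*(q-p-2) + p*p" by (simp add: algebra_simps)
      moreover have "(q-p)*(q-p-2) + p*p \<ge> 0"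
      proof (cases "d' = 0")
        case True
        then have "p = 0" by (simp add: p_def)
        then show ?thesis using pq by simp
      next
        case False
        then have "p \<ge> 1" by (simp add: p_def)
        then have "p*p \<ge> 1" using mult_mono[of 1 p 1 p] by simp
        then show ?thesis using j by simp
      qed
      ultimately show ?thesis by simp
    qed
    have "p*V = (p*(q-2*p))*U" unfolding V by simp
    also have "\<dots> \<le> ((q-p)*(q-2))*U" using key assms by (intro mult_right_mono) auto
    also have "\<dots> = (q-p)*((x-1)*U)" by (simp add: x_def q_def algebra_simps)
    finally show ?thesis .
  qed
  have eq: "q * (x*Aa + x*Cc + (q-1)*((x-1)*U)) - (p*((q-p)*Aa) + p * (x*Aa + x*Cc + (p-1)*((x-1)*U)) + (q-p)*(x*Aa + p*((x-1)*U)) + p*(p-1)*V + p*(q-p)*V)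
     = (q-p)*(x*Cc - p*Aa) + x*((q-p)*((x-1)*U) - p*V)"
    by (simp add: x_def q_def algebra_simps)
  have D3: "0 \<le> x*((q-p)*((x-1)*U) - p*V)" using D2 x1 by simp
  show ?thesis using SCle top eq D1 D3 unfolding p_def q_def bb_def by linarith
qed


lemma score_zero_d: "score 0 l e 0 b = 0"
  unfolding score_SC by (simp add: SC_def)

lemma r_ids:
  fixes d :: nat and l e :: real
  defines "x \<equiv> real d - 1" and "M \<equiv> l/2 - e"
  shows "r4 d l e = l/2 * r7 d l e + (1-l/2)*M"
    and "r3 d l e = r4 d l e + (1-l/2)^2"
    and "r6 d l e = l/2 * r4 d l e + l/2*(1-l/2)*M"
    and "r5 d l e = r6 d l e + l/2*(1-l/2)^2"
    and "r1 d l e = r7 d l e - x*(1-l^2/3)*M"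
    and "r7 d l e = (1-e) + x*M"
    and "r1 d l e = (1-l/2) + M*(l^2*x+3)/3"
    and "(l*x+2)*M + l*(1-l/2) = 2*r4 d l e"
    and "r4 d l e + r5 d l e + (real d - 2)*r6 d l e = (1+x*l/2)*r4 d l e + l/2*(1-l/2)*(x*M + (1-l/2))"
    and "r1 d l e + r3 d l e + (real d - 1)*r2 d l e = r7 d l e*(1+x*l^2/3) + r4 d l e + (1-l/2)^2"
    and "r3 d l e = r1 d l e + x*(l/2 - l^2/3)*M"
    and "r5 d l e = l/2 * r3 d l e + l/2*(1-l/2)*M"
    and "r2 d l e = (1-l^2/3)*M + l^2/3 * r7 d l e"
  unfolding x_def M_def r1_def r2_def r3_def r4_def r5_def r6_def r7_def epsP_def epsM_def
  by (simp_all add: field_simps power2_eq_square)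


lemma r4_formula: "4*r4 d l e = l*(l*(real d - 2)+4) - 2*e*(l*(real d - 1)+2)"
  unfolding r4_def epsP_def epsM_def by (simp add: field_simps)

lemma score_top: "score d l e d 1 = SC (r1 d l e) (r2 d l e) (r3 d l e) (r4 d l e) (r5 d l e) (r6 d l e) (r7 d l e) (real d) (real d) 1"
  unfolding score_SC by simp

lemma partA:
  fixes d :: nat and l e :: real
  assumes l0: "0 < l" and l1: "l < 1" and e0: "0 \<le> e" and e1: "e < 1" and d1: "d \<ge> 1"
    and hA: "e \<le> l * (l * (real d - 2) + 4) / (2 * (l * (real d - 1) + 2))"
  shows "is_global_max d l e d 1"
proof -
  define x where "x = real d - 1"
  define M where "M = l/2 - e"
  have x0: "0 \<le> x" using d1 by (simp add: x_def)
  have den: "0 < l * (real d - 1) + 2"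
  proof -
    have "0 \<le> l * (real d - 1)" using x0 l0 unfolding x_def by simp
    then show ?thesis by simp
  qed
  have "e * (2 * (l * (real d - 1) + 2)) \<le> l * (l * (real d - 2) + 4)"
    using hA den by (simp add: pos_le_divide_eq)
  then have r4: "0 \<le> r4 d l e" using r4_formula[of d l e] by (simp add: algebra_simps)
  note ids = r_ids[where d=d and l=l and e=e, folded x_def M_def]
  have lsq: "l^2 < 1" using l0 l1 by (simp add: power_less_one_iff abs_less_iff) 
  have c3: "0 < 1 - l^2/3" using lsq by simp
  have a0: "0 < 1 - l/2" using l1 by simp
  have r7: "0 \<le> r7 d l e"
  proof (cases "M \<ge> 0")
    case True then show ?thesis using ids(6) x0 e1 by (simp add: mult_nonneg_nonneg)
  next
    case False
    then have "(1-l/2)*M \<le> 0" using a0 by (intro mult_nonneg_nonpos) auto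
    then have "0 \<le> l/2 * r7 d l e" using ids(1) r4 by linarith
    then show ?thesis using l0 by (simp add: zero_le_mult_iff)
  qed
  have r1: "0 \<le> r1 d l e"
  proof (cases "M \<ge> 0")
    case True
    have "0 \<le> M*(l^2*x+3)/3" using True x0 by simp
    then show ?thesis using ids(7) a0 by linarith
  next
    case False
    have "x*(1-l^2/3)*M \<le> 0" using False x0 c3 by (simp add: mult_nonneg_nonpos)
    then show ?thesis using ids(5) r7 by linarith
  qed
  have r3: "0 \<le> r3 d l e" using ids(2) r4 by simp
  have Mb: "x*M \<ge> -(1-l/2) \<and> M \<ge> -(1-l/2)"
  proof (cases "M \<ge> 0")
    case True
    have "0 \<le> x*M" using True x0 by simp
    then show ?thesis using True a0 by linarith
  next
    case False
    have xM: "x*M \<le> 0" using False x0 by (simp add: mult_nonneg_nonpos)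
    have lxM: "l*(x*M) \<le> 0" using xM l0 by (simp add: mult_nonneg_nonpos)
    have e1': "(l*x+2)*M = l*(x*M) + 2*M" by (simp add: algebra_simps)
    have h: "(l*x+2)*M \<ge> -(l*(1-l/2))" using ids(8) r4 by linarith
    have "2*M \<ge> -(l*(1-l/2))" using h e1' lxM by linarith
    moreover have "l*(1-l/2) \<le> 2*(1-l/2)" using a0 l1 by (intro mult_right_mono) auto
    moreover have "l*(x*M) \<ge> l*(-(1-l/2))" using h e1' False by (simp add: algebra_simps)
    then have "x*M \<ge> -(1-l/2)" using l0 by (simp add: mult_le_cancel_left_pos)
    ultimately show ?thesis by (smt (verit))
  qed
  have r5: "0 \<le> r5 d l e"
  proof -
    have "l/2*(1-l/2)^2 + l/2*(1-l/2)*M = l/2*(1-l/2)*((1-l/2) + M)" by (simp add: field_simps power2_eq_square)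
    moreover have "0 \<le> l/2*(1-l/2)*((1-l/2) + M)" using Mb l0 a0 by simp
    moreover have "l/2 * r3 d l e \<ge> l/2*(1-l/2)^2" using ids(2) r4 l0 by simp
    ultimately show ?thesis using ids(12) by linarith
  qed
  have K: "0 \<le> r4 d l e + r5 d l e + (real d - 2)*r6 d l e"
  proof -
    have "0 \<le> (1+x*l/2)*r4 d l e" using x0 l0 r4 by simp
    moreover have "0 \<le> l/2*(1-l/2)*(x*M + (1-l/2))" using Mb l0 a0 by simp
    ultimately show ?thesis using ids(9) by linarith
  qed
  have K2: "0 \<le> r1 d l e + r3 d l e + (real d - 1)*r2 d l e"
  proof -
    have "0 \<le> r7 d l e*(1+x*l^2/3)" using x0 r7 by simp
    then have "0 \<le> r1 d l e + r3 d l e + x*r2 d l e" using ids(10) r4 by simp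
    then show ?thesis unfolding x_def .
  qed
  show ?thesis unfolding is_global_max_def
  proof (intro conjI allI impI)
    fix d' b :: nat assume h: "d' \<le> d \<and> b \<le> 1"
    show "score d l e d' b \<le> score d l e d 1"
      unfolding score_SC[of d l e d' b] score_top
      by (rule caseA_SC) (use r1 r3 r4 r5 r7 K K2 h in auto)
  qed auto
qed


lemma gm_zero: "b0 \<le> 1 \<Longrightarrow> is_global_max 0 l e 0 b0"
  unfolding is_global_max_def using score_zero_d by auto

lemma partB:
  fixes d :: nat and l e :: real
  assumes l0: "0 < l" and l1: "l < 1" and e0: "0 \<le> e" and e1: "e < 1"
    and hB: "e = (l * (real d - 1) + 2) / (2 * real d)"
  shows "is_global_max d l e d 1"
proof (cases "d = 0")
  case True then show ?thesis using gm_zero by simp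
next
  case False
  then have dpos: "0 < real d" by simp
  have he: "e * (2 * real d) = l * (real d - 1) + 2" using hB dpos by simp
  have d2: "d \<ge> 2"
  proof (rule ccontr)
    assume "\<not> d \<ge> 2"
    then have "d = 1" using False by simp
    then show False using he e1 by simp
  qed
  define m where "m = e - l/2"
  have m0: "0 < m"
  proof -
    have "2 * real d * m = 2 - l" using he by (simp add: m_def algebra_simps)
    then show ?thesis using dpos l1 by (smt (verit) mult_pos_pos mult_nonneg_nonpos)
  qed
  have hP: "1 - e = (real d - 1) * m"
  proof -
    have a: "e*(2*real d) = 2*(e*real d)" by simp
    have b: "l * (real d - 1) = l*real d - l" by (simp add: algebra_simps)
    have c: "(real d - 1) * m = e*real d - e - l*real d/2 + l/2" by (simp add: m_def field_simps)
    show ?thesis using he a b c by linarith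
  qed
  have hM: "l / 2 - e = - m" by (simp add: m_def)
  define Aa where "Aa = (1-l/2)*m"
  define Cc where "Cc = (1-l^2/3)*m"
  define U where "U = l/2*(1-l/2)*m"
  define x where "x = real d - 1"
  have R1: "r1 d l e = x*Cc" unfolding r1_def epsP_def epsM_def hP hM Cc_def x_def by (simp add: field_simps power2_eq_square)
  have R2: "r2 d l e = -Cc" unfolding r2_def epsP_def epsM_def hP hM Cc_def by (simp add: field_simps power2_eq_square)
  have R3: "r3 d l e = x*Aa" unfolding r3_def epsP_def epsM_def hP hM Aa_def x_def by (simp add: field_simps power2_eq_square)
  have R4: "r4 d l e = -Aa" unfolding r4_def epsP_def epsM_def hP hM Aa_def by (simp add: field_simps power2_eq_square)
  have R5: "r5 d l e = (x-1)*U" unfolding r5_def epsP_def epsM_def hP hM U_def x_def by (simp add: field_simps power2_eq_square)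
  have R6: "r6 d l e = -2*U" unfolding r6_def epsP_def epsM_def hP hM U_def by (simp add: field_simps power2_eq_square)
  have R7: "r7 d l e = 0" unfolding r7_def epsP_def epsM_def hP hM by (simp add: algebra_simps)
  have lsq: "l^2 \<le> l" using l0 l1 by (simp add: power2_eq_square mult_left_le_one_le)
  have Aa0: "0 < Aa" unfolding Aa_def using m0 l1 by simp
  have AC: "Aa \<le> Cc" unfolding Aa_def Cc_def using m0 lsq l0 by (intro mult_right_mono) auto
  have CU: "2*U \<le> Cc"
  proof -
    have "l*(1-l/2) \<le> 1 - l^2/3"
    proof -
      have "0 \<le> l*l" by simp
      moreover have "l*(1-l/2) = l - l*l/2" by (simp add: algebra_simps)
      moreover have "l^2 = l*l" by (simp add: power2_eq_square)
      ultimately show ?thesis using l1 by linarith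
    qed
    then have "l*(1-l/2)*m \<le> (1-l^2/3)*m" using m0 by (intro mult_right_mono) auto
    then show ?thesis unfolding U_def Cc_def by (simp add: algebra_simps)
  qed
  have U0: "0 \<le> U" unfolding U_def using l0 l1 m0 by simp
  show ?thesis unfolding is_global_max_def
  proof (intro conjI allI impI)
    fix d' b :: nat assume h: "d' \<le> d \<and> b \<le> 1"
    show "score d l e d' b \<le> score d l e d 1"
      unfolding score_SC[of d l e d' b] score_top R1 R2 R3 R4 R5 R6 R7 x_def
      by (rule caseB_SC) (use Aa0 AC CU U0 d2 h in auto)
  qed auto
qed

lemma partC:
  fixes d :: nat and l e :: real
  assumes l0: "0 < l" and l1: "l < 1" and e0: "0 \<le> e" and e1: "e < 1"
    and hC: "e \<ge> l / 2 + 3 / 2 * ((2 - l) / (l^2 * (real d - 1) + 3))"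
  shows "is_global_max d l e 0 0"
proof (cases "d = 0")
  case True then show ?thesis using gm_zero by simp
next
  case False
  define x where "x = real d - 1"
  define M where "M = l/2 - e"
  have x0: "0 \<le> x" using False by (simp add: x_def)
  note ids = r_ids[where d=d and l=l and e=e, folded x_def M_def]
  have E0: "0 < l^2*x + 3" using x0 by (simp add: add_nonneg_pos)
  have "3 / 2 * ((2 - l) / (l^2*x + 3)) \<le> -M" using hC by (simp add: M_def x_def)
  moreover have "3 / 2 * ((2 - l) / (l^2*x + 3)) = (3 / 2 * (2 - l)) / (l^2*x + 3)" by simp
  ultimately have "(3 / 2 * (2 - l)) / (l^2*x + 3) \<le> -M" by simp
  then have "3 / 2 * (2 - l) \<le> -M * (l^2*x+3)" by (subst (asm) pos_divide_le_eq[OF E0])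
  then have ME: "M*(l^2*x+3)/3 \<le> -(1-l/2)"
  proof -
    assume h: "3 / 2 * (2 - l) \<le> -M * (l^2*x+3)"
    define E where "E = l^2*x+3"
    have "3 / 2 * (2 - l) \<le> -(M*E)" using h unfolding E_def by simp
    then have "M*E/3 \<le> -(1-l/2)" by (simp add: field_simps)
    then show ?thesis unfolding E_def .
  qed
  have Mneg: "M < 0"
  proof -
    have "0 < 3 / 2 * ((2 - l) / (l^2*x + 3))" using E0 l1 by simp
    then show ?thesis using hC by (simp add: M_def x_def)
  qed
  have lsq: "l^2 \<le> l" using l0 l1 by (simp add: power2_eq_square mult_left_le_one_le)
  have a0: "0 < 1 - l/2" using l1 by simp
  have r1: "r1 d l e \<le> 0" using ids(7) ME by linarith
  have r7: "r7 d l e \<le> 0"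
  proof -
    have "x*(1-l^2/3)*M \<le> 0" using x0 lsq l1 Mneg by (intro mult_nonneg_nonpos) auto
    then show ?thesis using ids(5) r1 by linarith
  qed
  have r3: "r3 d l e \<le> 0"
  proof -
    have "x*(l/2-l^2/3)*M \<le> 0" using x0 lsq l0 Mneg by (intro mult_nonneg_nonpos) auto
    then show ?thesis using ids(11) r1 by linarith
  qed
  have lM: "(1-l/2)*M \<le> 0" using a0 Mneg by (intro mult_nonneg_nonpos) auto
  have r4: "r4 d l e \<le> 0"
  proof -
    have "l/2 * r7 d l e \<le> 0" using l0 r7 by (intro mult_nonneg_nonpos) auto
    then show ?thesis using ids(1) lM by linarith
  qed
  have lM2: "l/2*(1-l/2)*M \<le> 0" using a0 l0 Mneg by (intro mult_nonneg_nonpos) auto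
  have r6: "r6 d l e \<le> 0"
  proof -
    have "l/2 * r4 d l e \<le> 0" using l0 r4 by (intro mult_nonneg_nonpos) auto
    then show ?thesis using ids(3) lM2 by linarith
  qed
  have r5: "r5 d l e \<le> 0"
  proof -
    have "l/2 * r3 d l e \<le> 0" using l0 r3 by (intro mult_nonneg_nonpos) auto
    then show ?thesis using ids(12) lM2 by linarith
  qed
  have r2: "r2 d l e \<le> 0"
  proof -
    have "l^2/3 * r7 d l e \<le> 0" using r7 by (intro mult_nonneg_nonpos) auto
    moreover have "(1-l^2/3)*M \<le> 0" using lsq l1 Mneg by (intro mult_nonneg_nonpos) auto
    ultimately show ?thesis using ids(13) by linarith
  qed
  show ?thesis unfolding is_global_max_def
  proof (intro conjI allI impI)
    fix d' b :: nat assume h: "d' \<le> d \<and> b \<le> 1"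
    have "score d l e d' b \<le> 0"
      unfolding score_SC[of d l e d' b]
      by (rule caseC_SC) (use r1 r2 r3 r4 r5 r6 r7 h in auto)
    moreover have "score d l e 0 0 = 0" unfolding score_SC by (simp add: SC_00)
    ultimately show "score d l e d' b \<le> score d l e 0 0" by simp
  qed auto
qed

theorem lemmaD2:
  fixes d :: nat and l e :: real
  assumes "0 < l" and "l < 1" and "0 \<le> e" and "e < 1"
  shows "(e \<le> l * (l * (real d - 2) + 4) / (2 * (l * (real d - 1) + 2))
            \<longrightarrow> is_global_max d l e d 1)
       \<and> (e = (l * (real d - 1) + 2) / (2 * real d) \<longrightarrow> is_global_max d l e d 1)
       \<and> (e \<ge> l / 2 + 3 / 2 * ((2 - l) / (l^2 * (real d - 1) + 3))
            \<longrightarrow> is_global_max d l e 0 0)"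
proof (intro conjI impI)
  assume h: "e \<le> l * (l * (real d - 2) + 4) / (2 * (l * (real d - 1) + 2))"
  show "is_global_max d l e d 1"
  proof (cases "d = 0")
    case True then show ?thesis using gm_zero by simp
  next
    case False then show ?thesis using partA[OF assms _ h] by simp
  qed
next
  assume "e = (l * (real d - 1) + 2) / (2 * real d)"
  then show "is_global_max d l e d 1" using partB[OF assms] by simp
next
  assume "e \<ge> l / 2 + 3 / 2 * ((2 - l) / (l^2 * (real d - 1) + 3))"
  then show "is_global_max d l e 0 0" using partC[OF assms] by simp
qed

end
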